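(* Let $G$ be a finite simple unmixed graph with $r$ minimal vertex covers, and let $\mathcal{LS}(I_c(G))$ be the linear syzygy matrix of $I_c(G)$. Then the graph $\mathcal{G}_{I_c(G)}$ is connected if and only if ${\rm rank}(\mathcal{LS}(I_c(G)))=r-1$.
   Context: $G$ has vertex set $\{t_1,\ldots,t_s\}$, $S=K[t_1,\ldots,t_s]$, $K$ a field. $G$ is unmixed if all minimal vertex covers (inclusion-minimal sets of vertices meeting every edge) have the same size. Let $C_1,\ldots,C_r$ be the minimal vertex covers and $u_i=\prod_{t_j\in C_i}t_j$; $I_c(G)=(u_1,\ldots,u_r)$. The graph $\mathcal{G}_{I_c(G)}$ has vertex set $\{C_1,\ldots,C_r\}$, with $\{C_i,C_j\}$ ($i\ne j$) an edge iff $|C_i\cup C_j|=|C_i|+1$. The linear syzygy matrix $\mathcal{LS}(I_c(G))$ is the $r\times|E(\mathcal{G}_{I_c(G)})|$ matrix whose columns are the vectors $t_\ell e_i-t_ke_j\in S^r$ such that $t_\ell u_i=t_k u_j$, one for each edge $\{C_i,C_j\}$ (it is the zero matrix if there are no such syzygies). The rank is the determinantal rank: the largest $k$ such that some $k\times k$ minor is nonzero. *)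

theory Defs
  imports "HOL-Library.Poly_Mapping" "Jordan_Normal_Form.Determinant"
begin

text \<open>Simple graph on the vertex set {0..<s} (vertex j stands for t_(j+1)),
  edges are 2-element subsets.\<close>
definition simple_graph :: "nat \<Rightarrow> nat set set \<Rightarrow> bool" where
  "simple_graph s E \<longleftrightarrow> (\<forall>e\<in>E. e \<subseteq> {..<s} \<and> card e = 2)"

definition vertex_cover :: "nat \<Rightarrow> nat set set \<Rightarrow> nat set \<Rightarrow> bool" where
  "vertex_cover s E C \<longleftrightarrow> C \<subseteq> {..<s} \<and> (\<forall>e\<in>E. e \<inter> C \<noteq> {})"

definition minimal_vertex_cover :: "nat \<Rightarrow> nat set set \<Rightarrow> nat set \<Rightarrow> bool" where
  "minimal_vertex_cover s E C \<longleftrightarrow> vertex_cover s E C \<and>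
     (\<forall>D. D \<subset> C \<longrightarrow> \<not> vertex_cover s E D)"

definition unmixed :: "nat \<Rightarrow> nat set set \<Rightarrow> bool" where
  "unmixed s E \<longleftrightarrow> (\<forall>C D. minimal_vertex_cover s E C \<longrightarrow> minimal_vertex_cover s E D
      \<longrightarrow> card C = card D)"

text \<open>Polynomial ring S = K[t_1,...,t_s], as finitely supported functions from
  monomials (exponent vectors) to K; the variable with index j.\<close>
definition var :: "nat \<Rightarrow> ((nat \<Rightarrow>\<^sub>0 nat) \<Rightarrow>\<^sub>0 'k::field)" where
  "var j = Poly_Mapping.single (Poly_Mapping.single j 1) 1"

definition cov_adj :: "nat set list \<Rightarrow> nat \<Rightarrow> nat \<Rightarrow> bool" where
  "cov_adj Cs i j \<longleftrightarrow> i < length Cs \<and> j < length Cs \<and> i \<noteq> j \<and>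
     card (Cs!i \<union> Cs!j) = card (Cs!i) + 1"

definition cov_graph_connected :: "nat set list \<Rightarrow> bool" where
  "cov_graph_connected Cs \<longleftrightarrow>
     (\<forall>i<length Cs. \<forall>j<length Cs. (i, j) \<in> {(a, b). cov_adj Cs a b}\<^sup>*)"

definition LS_cols :: "nat set list \<Rightarrow> (nat \<times> nat) set" where
  "LS_cols Cs = {(i, j). i < j \<and> cov_adj Cs i j}"

text \<open>Entry in row a of the column for the edge (i,j): the column is
  t_l e_i - t_k e_j with t_l u_i = t_k u_j, i.e. l the element of C_j - C_i and
  k the element of C_i - C_j.\<close>
definition LS_entry :: "nat set list \<Rightarrow> nat \<Rightarrow> nat \<times> nat \<Rightarrow> ((nat \<Rightarrow>\<^sub>0 nat) \<Rightarrow>\<^sub>0 'k::field)" where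
  "LS_entry Cs a p = (case p of (i, j) \<Rightarrow>
     (let l = (THE x. x \<in> Cs!j - Cs!i); k = (THE x. x \<in> Cs!i - Cs!j) in
      if a = i then var l else if a = j then - var k else 0))"

definition LS_rank :: "'k::field itself \<Rightarrow> nat set list \<Rightarrow> nat" where
  "LS_rank _ Cs = Max {k. \<exists>is js. distinct is \<and> distinct js \<and> length is = k \<and> length js = k \<and>
      set is \<subseteq> {..<length Cs} \<and> set js \<subseteq> LS_cols Cs \<and>
      det (mat k k (\<lambda>(a, b). (LS_entry Cs (is!a) (js!b) :: (nat \<Rightarrow>\<^sub>0 nat) \<Rightarrow>\<^sub>0 'k))) \<noteq> 0}"

end

theory Submission
  imports Defs
begin

definition good :: "nat set list \<Rightarrow> bool" where
  "good Cs \<longleftrightarrow> (\<forall>i<length Cs. finite (Cs!i)) \<and>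
     (\<forall>i<length Cs. \<forall>j<length Cs. card (Cs!i) = card (Cs!j))"

definition umon :: "nat set \<Rightarrow> ((nat \<Rightarrow>\<^sub>0 nat) \<Rightarrow>\<^sub>0 'k::field)" where
  "umon C = Poly_Mapping.single (\<Sum>x\<in>C. Poly_Mapping.single x 1) 1"

lemma adj_sym: assumes "good Cs" "cov_adj Cs i j" shows "cov_adj Cs j i"
  using assms unfolding good_def cov_adj_def by (metis Un_commute)

lemma adj_diff: assumes "good Cs" "cov_adj Cs i j" shows "\<exists>l. Cs!j - Cs!i = {l}"
proof -
  have f: "finite (Cs!i)" "finite (Cs!j)" using assms unfolding good_def cov_adj_def by auto
  have "card (Cs!i \<union> Cs!j) = card (Cs!i) + card (Cs!j - Cs!i)"
    using f card_Un_disjoint[of "Cs!i" "Cs!j - Cs!i"] by (simp add: Un_Diff_cancel)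
  then have "card (Cs!j - Cs!i) = 1" using assms(2) unfolding cov_adj_def by simp
  then show ?thesis by (simp add: card_1_singleton_iff)
qed

lemma single_nz: "(v::'b::zero) \<noteq> 0 \<Longrightarrow> Poly_Mapping.single k v \<noteq> 0"
  by (metis lookup_single_eq lookup_zero)

lemma var_nz: "(var l :: ((nat \<Rightarrow>\<^sub>0 nat) \<Rightarrow>\<^sub>0 'k::field)) \<noteq> 0"
  unfolding var_def by (simp add: single_nz)

lemma umon_nz: "(umon C :: ((nat \<Rightarrow>\<^sub>0 nat) \<Rightarrow>\<^sub>0 'k::field)) \<noteq> 0"
  unfolding umon_def by (simp add: single_nz)

lemma umon_insert: assumes "finite C" "l \<notin> C"
  shows "(umon C :: ((nat \<Rightarrow>\<^sub>0 nat) \<Rightarrow>\<^sub>0 'k::field)) * var l = umon (insert l C)"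
  using assms unfolding umon_def var_def by (simp add: mult_single add.commute)

lemma syz: assumes "good Cs" "cov_adj Cs i j"
  shows "(umon (Cs!i) :: ((nat \<Rightarrow>\<^sub>0 nat) \<Rightarrow>\<^sub>0 'k::field)) * var (THE x. x \<in> Cs!j - Cs!i)
       = umon (Cs!j) * var (THE x. x \<in> Cs!i - Cs!j)"
proof -
  obtain l where l: "Cs!j - Cs!i = {l}" using adj_diff[OF assms] by blast
  obtain k where k: "Cs!i - Cs!j = {k}" using adj_diff[OF assms(1) adj_sym[OF assms]] by blast
  have f: "finite (Cs!i)" "finite (Cs!j)" using assms unfolding good_def cov_adj_def by auto
  have "insert l (Cs!i) = insert k (Cs!j)" using l k by blast
  moreover have "l \<notin> Cs!i" "k \<notin> Cs!j" using l k by blast+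
  ultimately show ?thesis using l k f by (simp add: umon_insert)
qed


lemma vanish:
  assumes g: "good Cs" and dis: "distinct is" and isr: "set is \<subseteq> {..<length Cs}"
    and jsc: "set js \<subseteq> LS_cols Cs" and li: "length is = n" and lj: "length js = n"
    and Kne: "K \<noteq> {}" and Kis: "K \<subseteq> set is"
    and Kcl: "\<And>a b. cov_adj Cs a b \<Longrightarrow> a \<in> K \<Longrightarrow> b \<in> K"
  shows "det (mat n n (\<lambda>(a, b). (LS_entry Cs (is!a) (js!b) :: (nat \<Rightarrow>\<^sub>0 nat) \<Rightarrow>\<^sub>0 'k::field))) = 0"
proof -
  define M where "M = (mat n n (\<lambda>(a, b). (LS_entry Cs (is!a) (js!b) :: (nat \<Rightarrow>\<^sub>0 nat) \<Rightarrow>\<^sub>0 'k::field)))"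
  define w where "w = (\<lambda>x. if x \<in> K then umon (Cs!x) else (0 :: (nat \<Rightarrow>\<^sub>0 nat) \<Rightarrow>\<^sub>0 'k))"
  define v where "v = vec n (\<lambda>a. w (is!a))"
  have Mc: "M \<in> carrier_mat n n" unfolding M_def by simp
  have vc: "v \<in> carrier_vec n" unfolding v_def by simp
  obtain x where xK: "x \<in> K" using Kne by blast
  then obtain a0 where a0: "a0 < n" "is!a0 = x" using Kis li by (metis in_set_conv_nth subsetD)
  have "v $ a0 \<noteq> 0" using a0 xK unfolding v_def w_def by (simp add: umon_nz)
  then have vnz: "v \<noteq> 0\<^sub>v n" using a0 by auto
  have col: "(\<Sum>a<n. LS_entry Cs (is!a) (js!b) * w (is!a)) = 0" if b: "b < n" for b
  proof -
    obtain i j where ij: "js!b = (i,j)" by fastforce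
    have "(i,j) \<in> LS_cols Cs" using ij b jsc lj by (metis nth_mem subsetD)
    then have adj: "cov_adj Cs i j" and ilj: "i < j" unfolding LS_cols_def by auto
    have adj': "cov_adj Cs j i" using adj_sym[OF g adj] .
    define f where "f = (\<lambda>x. LS_entry Cs x (i,j) * w x)"
    have "(\<Sum>a<n. LS_entry Cs (is!a) (js!b) * w (is!a)) = (\<Sum>a<n. f (is!a))"
      unfolding f_def ij ..
    also have "\<dots> = sum f (set is)"
    proof -
      have "set is = (!) is ` {..<n}" using li by (auto simp: in_set_conv_nth)
      then have "sum f (set is) = sum f ((!) is ` {..<n})" by simp
      also have "\<dots> = sum (f \<circ> (!) is) {..<n}"
        by (rule sum.reindex) (use dis li in \<open>auto simp: inj_on_def nth_eq_iff_index_eq\<close>)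
      finally show ?thesis by simp
    qed
    also have "\<dots> = 0"
    proof (cases "i \<in> K")
      case True
      then have jK: "j \<in> K" using Kcl adj by blast
      have "sum f (set is) = sum f {i, j}"
      proof (rule sum.mono_neutral_right)
        show "{i,j} \<subseteq> set is" using True jK Kis by blast
        show "\<forall>x\<in>set is - {i, j}. f x = 0" unfolding f_def LS_entry_def by auto
      qed simp
      also have "\<dots> = f i + f j" using ilj by simp
      also have "\<dots> = 0"
        using ilj True jK syz[OF g adj, where 'k='k]
        unfolding f_def LS_entry_def w_def by (simp add: Let_def mult.commute)
      finally show ?thesis .
    next
      case False
      then have jK: "j \<notin> K" using Kcl adj' by blast
      have "f x = 0" for x using False jK unfolding f_def LS_entry_def w_def by (auto simp: Let_def)
      then show ?thesis by simp
    qed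
    finally show ?thesis .
  qed
  have "transpose_mat M *\<^sub>v v = 0\<^sub>v n"
  proof (rule eq_vecI)
    fix b assume "b < dim_vec (0\<^sub>v n :: ((nat \<Rightarrow>\<^sub>0 nat) \<Rightarrow>\<^sub>0 'k) vec)"
    then have b: "b < n" by simp
    have "(transpose_mat M *\<^sub>v v) $ b = (\<Sum>a<n. LS_entry Cs (is!a) (js!b) * w (is!a))"
      using b Mc unfolding M_def v_def
      by (simp add: scalar_prod_def lessThan_atLeast0)
    then show "(transpose_mat M *\<^sub>v v) $ b = 0\<^sub>v n $ b" using col[OF b] b by simp
  qed (use Mc in simp)
  then have "det (transpose_mat M) = 0"
    using det_0_iff_vec_prod_zero[of "transpose_mat M" n] Mc vc vnz by auto
  then show ?thesis using det_transpose[OF Mc] unfolding M_def by simp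
qed


lemma crossing:
  assumes "(x, y) \<in> {(a, b). P a b}\<^sup>*" "x \<in> T" "y \<notin> T"
  shows "\<exists>a b. P a b \<and> a \<in> T \<and> b \<notin> T"
  using assms by (induction rule: rtrancl_induct) auto

definition Inv :: "nat set list \<Rightarrow> nat \<Rightarrow> nat list \<Rightarrow> (nat \<times> nat) list \<Rightarrow> bool" where
  "Inv Cs n is js \<longleftrightarrow> length is = n \<and> length js = n \<and> distinct is \<and>
     set is \<subseteq> {..<length Cs} - {0} \<and>
     (\<forall>b<n. \<exists>w. js!b \<in> LS_cols Cs \<and> (js!b = (is!b, w) \<or> js!b = (w, is!b)) \<and>
        (w = 0 \<or> (\<exists>m<b. w = is!m)))"

lemma Inv_step:
  assumes g: "good Cs" and con: "cov_graph_connected Cs" and I: "Inv Cs n is js"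
    and nr: "n + 1 < length Cs"
  shows "\<exists>is' js'. Inv Cs (n+1) is' js'"
proof -
  let ?T = "insert 0 (set is)"
  have l: "length is = n" and d: "distinct is" and sis: "set is \<subseteq> {..<length Cs} - {0}"
    using I unfolding Inv_def by auto
  have "0 \<notin> set is" using sis by auto
  then have "card ?T = n + 1" using l d by (simp add: distinct_card)
  moreover have "?T \<subseteq> {..<length Cs}" using sis nr by auto
  ultimately have "?T \<noteq> {..<length Cs}" using nr by (metis card_lessThan less_irrefl)
  then obtain v where v: "v < length Cs" "v \<notin> ?T" using \<open>?T \<subseteq> {..<length Cs}\<close> by blast
  have "0 < length Cs" using nr by linarith
  have "(0, v) \<in> {(a, b). cov_adj Cs a b}\<^sup>*" using con v(1) \<open>0 < length Cs\<close> unfolding cov_graph_connected_def by blast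
  from crossing[OF this, of ?T] v obtain a y where ay: "cov_adj Cs a y" "a \<in> ?T" "y \<notin> ?T" by auto
  have yr: "y < length Cs" and ar: "a < length Cs" and ay': "a \<noteq> y"
    using ay(1) unfolding cov_adj_def by auto
  define e where "e = (min a y, max a y)"
  have eL: "e \<in> LS_cols Cs"
    using ay(1) adj_sym[OF g ay(1)] ay' unfolding e_def LS_cols_def by (auto simp: min_def max_def)
  have "Inv Cs (n+1) (is @ [y]) (js @ [e])"
    unfolding Inv_def
  proof (intro conjI allI impI)
    show "length (is @ [y]) = n + 1" using l by simp
    show "length (js @ [e]) = n + 1" using I unfolding Inv_def by simp
    show "distinct (is @ [y])" using d ay(3) by simp
    show "set (is @ [y]) \<subseteq> {..<length Cs} - {0}" using sis ay(3) yr by auto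
    fix b assume b: "b < n + 1"
    show "\<exists>w. (js @ [e]) ! b \<in> LS_cols Cs \<and>
         ((js @ [e]) ! b = ((is @ [y]) ! b, w) \<or> (js @ [e]) ! b = (w, (is @ [y]) ! b)) \<and>
         (w = 0 \<or> (\<exists>m<b. w = (is @ [y]) ! m))"
    proof (cases "b < n")
      case True
      then obtain w where w: "js!b \<in> LS_cols Cs" "js!b = (is!b, w) \<or> js!b = (w, is!b)"
        "w = 0 \<or> (\<exists>m<b. w = is!m)" using I unfolding Inv_def by blast
      have lj: "length js = n" using I unfolding Inv_def by simp
      have h1: "(js@[e])!b = js!b" "(is@[y])!b = is!b" using True l lj by (simp_all add: nth_append)
      have h2: "\<forall>m<b. (is@[y])!m = is!m" using True l by (simp add: nth_append)
      show ?thesis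
        apply (rule exI[of _ w])
        unfolding h1 using w h2 by (metis)
    next
      case False
      then have bn: "b = n" using b by simp
      have lj: "length js = n" using I unfolding Inv_def by simp
      have "a = 0 \<or> (\<exists>m<n. a = (is @ [y]) ! m)"
      proof (cases "a = 0")
        case False
        then have "a \<in> set is" using ay(2) by simp
        then obtain m where m: "m < n" "a = is!m" using l by (metis in_set_conv_nth)
        then have "a = (is @ [y]) ! m" using l by (simp add: nth_append)
        then show ?thesis using m by blast
      qed simp
      moreover have "(js@[e])!b = e" "(is@[y])!b = y" using bn l lj by (simp_all add: nth_append)
      moreover have "e = (y, a) \<or> e = (a, y)" unfolding e_def by (simp add: min_def max_def)
      ultimately show ?thesis
        apply (intro exI[of _ a])
        using bn eL by metis
    qed
  qed
  then show ?thesis by blast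
qed

lemma Inv_exists:
  assumes g: "good Cs" and con: "cov_graph_connected Cs" and n: "n < length Cs \<or> n = 0"
  shows "\<exists>is js. Inv Cs n is js"
  using n
proof (induction n)
  case 0
  show ?case by (rule exI[of _ "[]"], rule exI[of _ "[]"]) (simp add: Inv_def)
next
  case (Suc n)
  then obtain xs ys where "Inv Cs n xs ys" by auto
  then show ?case using Inv_step[OF g con] Suc.prems by auto
qed


lemma LS_entry_zero: "x \<noteq> fst p \<Longrightarrow> x \<noteq> snd p \<Longrightarrow> LS_entry Cs x p = 0"
  by (cases p) (simp add: LS_entry_def Let_def)

lemma LS_entry_nz: "x = fst p \<or> x = snd p \<Longrightarrow>
   (LS_entry Cs x p :: (nat \<Rightarrow>\<^sub>0 nat) \<Rightarrow>\<^sub>0 'k::field) \<noteq> 0"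
  by (cases p) (auto simp add: LS_entry_def Let_def var_nz)

lemma Inv_off:
  assumes I: "Inv Cs n is js" and ab: "b < a" "a < n"
  shows "is!a \<noteq> fst (js!b) \<and> is!a \<noteq> snd (js!b)"
proof -
  obtain w where w: "js!b = (is!b, w) \<or> js!b = (w, is!b)" "w = 0 \<or> (\<exists>m<b. w = is!m)"
    using I ab unfolding Inv_def by (meson less_trans)
  have l: "length is = n" and d: "distinct is" and sis: "set is \<subseteq> {..<length Cs} - {0}"
    using I unfolding Inv_def by auto
  have "is!a \<in> set is" using ab l by simp
  then have a0: "is!a \<noteq> 0" using sis by auto
  have ab': "is!a \<noteq> is!b" using ab l d by (simp add: nth_eq_iff_index_eq)
  have "is!a \<noteq> w"
  proof
    assume "is!a = w"
    then show False using w(2) a0 ab l d by (auto simp: nth_eq_iff_index_eq)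
  qed
  then show ?thesis using w(1) ab' by auto
qed

lemma Inv_diag:
  assumes I: "Inv Cs n is js" and b: "b < n"
  shows "is!b = fst (js!b) \<or> is!b = snd (js!b)"
  using I b unfolding Inv_def by fastforce

lemma Inv_good:
  assumes I: "Inv Cs n is js"
  shows "distinct js" "set js \<subseteq> LS_cols Cs" "set is \<subseteq> {..<length Cs}"
    "det (mat n n (\<lambda>(a, b). (LS_entry Cs (is!a) (js!b) :: (nat \<Rightarrow>\<^sub>0 nat) \<Rightarrow>\<^sub>0 'k::field))) \<noteq> 0"
proof -
  have lj: "length js = n" and l: "length is = n" using I unfolding Inv_def by auto
  show "set is \<subseteq> {..<length Cs}" using I unfolding Inv_def by auto
  show "set js \<subseteq> LS_cols Cs"
  proof
    fix p assume "p \<in> set js"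
    then obtain b where "b < n" "p = js!b" using lj by (metis in_set_conv_nth)
    then show "p \<in> LS_cols Cs" using I unfolding Inv_def by blast
  qed
  show "distinct js"
    unfolding distinct_conv_nth
  proof (intro allI impI)
    fix a b assume h: "a < length js" "b < length js" "a \<noteq> b"
    show "js!a \<noteq> js!b"
    proof (cases "b < a")
      case True
      then show ?thesis using Inv_off[OF I True] Inv_diag[OF I, of a] h lj by auto
    next
      case False
      then have ab: "a < b" using h by simp
      then show ?thesis using Inv_off[OF I ab] Inv_diag[OF I, of b] h lj by auto
    qed
  qed
  define M where "M = (mat n n (\<lambda>(a, b). (LS_entry Cs (is!a) (js!b) :: (nat \<Rightarrow>\<^sub>0 nat) \<Rightarrow>\<^sub>0 'k::field)))"
  have Mc: "M \<in> carrier_mat n n" unfolding M_def by simp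
  have "det M \<noteq> 0"
  proof -
  have ut: "upper_triangular M"
    unfolding upper_triangular_def
  proof (intro allI impI)
    fix i j assume h: "i < dim_row M" "j < i"
    then have "i < n" unfolding M_def by simp
    then show "M $$ (i, j) = 0" using h Inv_off[OF I h(2)] unfolding M_def
      by (simp add: LS_entry_zero)
  qed
  have "det M = (\<Prod>i = 0..<n. M $$ (i, i))"
    using det_upper_triangular[OF ut Mc] Mc by (simp add: prod_list_diag_prod)
  also have "\<dots> \<noteq> 0"
  proof -
    have "M $$ (i, i) \<noteq> 0" if "i \<in> {0..<n}" for i
      using that Inv_diag[OF I, of i] unfolding M_def by (simp add: LS_entry_nz)
    then show ?thesis by (simp add: prod_zero_iff)
  qed
  finally show "det M \<noteq> 0" .
  qed
  then show "det (mat n n (\<lambda>(a, b). (LS_entry Cs (is!a) (js!b) :: (nat \<Rightarrow>\<^sub>0 nat) \<Rightarrow>\<^sub>0 'k::field))) \<noteq> 0"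
    unfolding M_def .
qed


theorem proposition4p1:
  fixes s :: nat and E :: "nat set set" and Cs :: "nat set list"
  assumes "simple_graph s E"
    and "unmixed s E"
    and "distinct Cs"
    and "set Cs = {C. minimal_vertex_cover s E C}"
  shows "cov_graph_connected Cs \<longleftrightarrow> LS_rank TYPE('k::field) Cs = length Cs - 1"
proof -
  let ?r = "length Cs"
  have mvc: "minimal_vertex_cover s E (Cs!i)" if "i < ?r" for i
    using assms(4) that nth_mem by blast
  have g: "good Cs" unfolding good_def
  proof (intro conjI allI impI)
    fix i assume "i < ?r"
    then have "Cs!i \<subseteq> {..<s}" using mvc[of i]
      unfolding minimal_vertex_cover_def vertex_cover_def by blast
    then show "finite (Cs!i)" using finite_subset[OF _ finite_lessThan] by blast
  next
    fix i j assume "i < ?r" "j < ?r"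
    then show "card (Cs!i) = card (Cs!j)" using mvc assms(2) unfolding unmixed_def by blast
  qed
  define S where "S = {k. \<exists>is js. distinct is \<and> distinct js \<and> length is = k \<and> length js = k \<and>
      set is \<subseteq> {..<length Cs} \<and> set js \<subseteq> LS_cols Cs \<and>
      det (mat k k (\<lambda>(a, b). (LS_entry Cs (is!a) (js!b) :: (nat \<Rightarrow>\<^sub>0 nat) \<Rightarrow>\<^sub>0 'k))) \<noteq> 0}"
  have rk: "LS_rank TYPE('k) Cs = Max S" unfolding LS_rank_def S_def ..
  have Sb: "k \<le> ?r" if kS: "k \<in> S" for k
  proof -
    obtain xs :: "nat list" where xs: "distinct xs" "length xs = k" "set xs \<subseteq> {..<?r}"
      using kS unfolding S_def by blast
    have "card (set xs) \<le> card {..<?r}" by (rule card_mono[OF finite_lessThan xs(3)])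
    then show ?thesis using xs distinct_card[OF xs(1)] by simp
  qed
  have fS: "finite S" using Sb by (meson finite_nat_set_iff_bounded_le)
  have InvS: "n \<in> S" if "Inv Cs n xs ys" for n xs ys
    unfolding S_def using Inv_good(1-3)[OF that] Inv_good(4)[OF that, where 'k='k] that unfolding Inv_def by blast
  have S0: "0 \<in> S" by (rule InvS[of 0 "[]" "[]"]) (simp add: Inv_def)
  have full: "set xs = {..<?r}" if "distinct xs" "length xs = ?r" "set xs \<subseteq> {..<?r}" for xs :: "nat list"
  proof -
    have "card (set xs) = card {..<?r}" using that distinct_card[OF that(1)] by simp
    then show ?thesis using card_subset_eq[OF finite_lessThan that(3)] by simp
  qed
  show ?thesis
  proof
    assume con: "cov_graph_connected Cs"
    obtain xs ys where I: "Inv Cs (?r - 1) xs ys" using Inv_exists[OF g con, of "?r - 1"] by force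
    have m: "?r - 1 \<in> S" by (rule InvS[OF I])
    have "k \<le> ?r - 1" if kS: "k \<in> S" for k
    proof (rule ccontr)
      assume "\<not> k \<le> ?r - 1"
      then have k: "k = ?r" "?r \<ge> 1" using Sb[OF kS] by auto
      obtain xs js where h: "distinct xs" "length xs = k" "length js = k"
        "set xs \<subseteq> {..<length Cs}" "set js \<subseteq> LS_cols Cs"
        "det (mat k k (\<lambda>(a, b). (LS_entry Cs (xs!a) (js!b) :: (nat \<Rightarrow>\<^sub>0 nat) \<Rightarrow>\<^sub>0 'k))) \<noteq> 0"
        using kS unfolding S_def by blast
      have "set xs = {..<?r}" using full h k by simp
      have "det (mat k k (\<lambda>(a, b). (LS_entry Cs (xs!a) (js!b) :: (nat \<Rightarrow>\<^sub>0 nat) \<Rightarrow>\<^sub>0 'k))) = 0"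
      proof (rule vanish[OF g h(1) h(4) h(5) h(2) h(3), of "{..<?r}"])
        have "0 \<in> {..<?r}" using k(2) by (cases Cs) auto
        then show "{..<?r} \<noteq> {}" by blast
        show "{..<?r} \<subseteq> set xs" using \<open>set xs = {..<?r}\<close> by simp
        show "\<And>a b. cov_adj Cs a b \<Longrightarrow> a \<in> {..<?r} \<Longrightarrow> b \<in> {..<?r}"
          unfolding cov_adj_def by auto
      qed
      then show False using h(6) by simp
    qed
    then have "Max S = ?r - 1" using m fS by (intro Max_eqI) auto
    then show "LS_rank TYPE('k) Cs = ?r - 1" using rk by simp
  next
    assume r1: "LS_rank TYPE('k) Cs = ?r - 1"
    show "cov_graph_connected Cs"
    proof (rule ccontr)
      let ?R = "{(a, b). cov_adj Cs a b}"
      assume "\<not> cov_graph_connected Cs"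
      then obtain i j where ij: "i < ?r" "j < ?r" "(i, j) \<notin> ?R\<^sup>*"
        unfolding cov_graph_connected_def by blast
      define K1 where "K1 = {x. x < ?r \<and> (i, x) \<in> ?R\<^sup>*}"
      define K2 where "K2 = {x. x < ?r \<and> (i, x) \<notin> ?R\<^sup>*}"
      have K1c: "b \<in> K1" if ab: "cov_adj Cs a b" "a \<in> K1" for a b
      proof -
        have "(i, a) \<in> ?R\<^sup>*" using ab(2) unfolding K1_def by simp
        moreover have "(a, b) \<in> ?R" using ab(1) by simp
        ultimately have "(i, b) \<in> ?R\<^sup>*" by (rule rtrancl_into_rtrancl)
        moreover have "b < ?r" using ab(1) unfolding cov_adj_def by simp
        ultimately show ?thesis unfolding K1_def by simp
      qed
      have K2c: "b \<in> K2" if "cov_adj Cs a b" "a \<in> K2" for a b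
      proof -
        have "b < ?r" using that(1) unfolding cov_adj_def by simp
        moreover have "(i, b) \<notin> ?R\<^sup>*"
        proof
          assume "(i, b) \<in> ?R\<^sup>*"
          moreover have "(b, a) \<in> ?R" using adj_sym[OF g that(1)] by simp
          ultimately have "(i, a) \<in> ?R\<^sup>*" by (rule rtrancl_into_rtrancl)
          then show False using that(2) unfolding K2_def by simp
        qed
        ultimately show ?thesis unfolding K2_def by simp
      qed
      have iK1: "i \<in> K1" and jK2: "j \<in> K2" using ij unfolding K1_def K2_def by auto
      have "Max S \<in> S" using fS S0 by (intro Max_in) auto
      then have "?r - 1 \<in> S" using rk r1 by simp
      then obtain xs js where h: "distinct xs" "length xs = ?r - 1" "length js = ?r - 1"
        "set xs \<subseteq> {..<length Cs}" "set js \<subseteq> LS_cols Cs"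
        "det (mat (?r - 1) (?r - 1) (\<lambda>(a, b). (LS_entry Cs (xs!a) (js!b) :: (nat \<Rightarrow>\<^sub>0 nat) \<Rightarrow>\<^sub>0 'k))) \<noteq> 0"
        unfolding S_def by blast
      have "K1 \<subseteq> set xs \<or> K2 \<subseteq> set xs"
      proof (rule ccontr)
        assume "\<not> (K1 \<subseteq> set xs \<or> K2 \<subseteq> set xs)"
        then obtain x1 x2 where x: "x1 \<in> K1" "x1 \<notin> set xs" "x2 \<in> K2" "x2 \<notin> set xs" by blast
        have "x1 \<noteq> x2" using x unfolding K1_def K2_def by auto
        have sub: "insert x1 (insert x2 (set xs)) \<subseteq> {..<?r}"
          using x h(4) unfolding K1_def K2_def by auto
        have "card (insert x1 (insert x2 (set xs))) = ?r - 1 + 2"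
          using x \<open>x1 \<noteq> x2\<close> h(1,2) by (simp add: distinct_card)
        moreover have "card (insert x1 (insert x2 (set xs))) \<le> ?r"
          using card_mono[OF _ sub] by simp
        ultimately show False by simp
      qed
      then obtain K where K: "K \<noteq> {}" "K \<subseteq> set xs" "\<And>a b. cov_adj Cs a b \<Longrightarrow> a \<in> K \<Longrightarrow> b \<in> K"
        using iK1 jK2 K1c K2c by blast
      have "det (mat (?r - 1) (?r - 1) (\<lambda>(a, b). (LS_entry Cs (xs!a) (js!b) :: (nat \<Rightarrow>\<^sub>0 nat) \<Rightarrow>\<^sub>0 'k))) = 0"
        by (rule vanish[OF g h(1) h(4) h(5) h(2) h(3) K])
      then show False using h(6) by simp
    qed
  qed
qed

end
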